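(* Let $M\in\mathrm{M}_n(\mathbb{K})$. If there exists a nonzero $M$-code $\mathcal{C}\subsetneq\mathbb{L}^n$ with parameters $[n,k]$ that is MRD, i.e. $M_1(\mathcal{C})=n-k+1$, then the minimal polynomial of $M$ is $\mu_M=\pi^\ell$ for some integer $\ell\ge1$ and some monic polynomial $\pi\in\mathbb{K}[x]$ irreducible over $\mathbb{K}$.
   Context: Let $\mathbb{L}/\mathbb{K}$ be a field extension of finite degree $m$, and $n\ge 1$ an integer with $m\ge n$ (standing assumption). Vectors are row vectors. For $c=(c_1,\dots,c_n)\in\mathbb{L}^n$, $\mathrm{Rsupp}(c)\subseteq\mathbb{K}^n$ is the $\mathbb{K}$-row space of the $m\times n$ matrix over $\mathbb{K}$ whose $j$-th column is the coordinate vector of $c_j$ in a fixed $\mathbb{K}$-basis of $\mathbb{L}$, and $\mathrm{wt}_R(c)=\dim_{\mathbb{K}}\mathrm{Rsupp}(c)$; for an $\mathbb{L}$-subspace $\mathcal{D}$, $\mathrm{wt}_R(\mathcal{D})$ is the $\mathbb{K}$-dimension of the span of all $\mathrm{Rsupp}(d)$, $d\in\mathcal{D}$. For a linear $[n,k]$ code $\mathcal{C}$ and $1\le r\le k$, $M_r(\mathcal{C})=\min\{\mathrm{wt}_R(\mathcal{D}):\mathcal{D}\subseteq\mathcal{C},\dim_{\mathbb{L}}\mathcal{D}=r\}$. For $M\in\mathrm{M}_n(\mathbb{K})$, a linear code $\mathcal{C}\subseteq\mathbb{L}^n$ is an $M$-code if $cM^t\in\mathcal{C}$ for all $c\in\mathcal{C}$.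 *)

theory Defs
  imports "HOL-Analysis.Analysis" "HOL-Computational_Algebra.Computational_Algebra"
begin

(* L/K is modelled by two field types 'K, 'L and a ring embedding emb : 'K => 'L. *)
definition field_emb :: "('K::field \<Rightarrow> 'L::field) \<Rightarrow> bool" where
  "field_emb emb \<longleftrightarrow> emb 1 = 1 \<and> (\<forall>x y. emb (x + y) = emb x + emb y) \<and>
     (\<forall>x y. emb (x * y) = emb x * emb y)"

(* b : 'm => 'L is a K-basis of L (so [L:K] = CARD('m)) *)
definition is_K_basis :: "('K::field \<Rightarrow> 'L::field) \<Rightarrow> ('m::finite \<Rightarrow> 'L) \<Rightarrow> bool" where
  "is_K_basis emb b \<longleftrightarrow> (\<forall>l. \<exists>!a::'K^'m. l = (\<Sum>i\<in>UNIV. emb (a $ i) * b i))"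

definition coord :: "('K::field \<Rightarrow> 'L::field) \<Rightarrow> ('m::finite \<Rightarrow> 'L) \<Rightarrow> 'L \<Rightarrow> 'K^'m" where
  "coord emb b l = (THE a. l = (\<Sum>i\<in>UNIV. emb (a $ i) * b i))"

definition coord_matrix :: "('K::field \<Rightarrow> 'L::field) \<Rightarrow> ('m::finite \<Rightarrow> 'L) \<Rightarrow> 'L^'n \<Rightarrow> 'K^'n^'m" where
  "coord_matrix emb b c = (\<chi> i j. coord emb b (c $ j) $ i)"

definition Rsupp :: "('K::field \<Rightarrow> 'L::field) \<Rightarrow> ('m::finite \<Rightarrow> 'L) \<Rightarrow> 'L^'n \<Rightarrow> ('K^'n) set" where
  "Rsupp emb b c = vec.span (range (\<lambda>i. row i (coord_matrix emb b c)))"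

definition wtR :: "('K::field \<Rightarrow> 'L::field) \<Rightarrow> ('m::finite \<Rightarrow> 'L) \<Rightarrow> 'L^'n \<Rightarrow> nat" where
  "wtR emb b c = vec.dim (Rsupp emb b c)"

definition wtR_space :: "('K::field \<Rightarrow> 'L::field) \<Rightarrow> ('m::finite \<Rightarrow> 'L) \<Rightarrow> ('L^'n) set \<Rightarrow> nat" where
  "wtR_space emb b D = vec.dim (vec.span (\<Union>d\<in>D. Rsupp emb b d))"

definition gen_rank_weight :: "('K::field \<Rightarrow> 'L::field) \<Rightarrow> ('m::finite \<Rightarrow> 'L) \<Rightarrow> nat \<Rightarrow> ('L^'n) set \<Rightarrow> nat" where
  "gen_rank_weight emb b r C =
     Min {wtR_space emb b D | D. vec.subspace D \<and> D \<subseteq> C \<and> vec.dim D = r}"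

(* C is an M-code: c M^t \<in> C for all c \<in> C, i.e. M c^t (M mapped into L) *)
definition is_M_code :: "('K::field \<Rightarrow> 'L::field) \<Rightarrow> 'K^'n^'n \<Rightarrow> ('L^'n) set \<Rightarrow> bool" where
  "is_M_code emb M C \<longleftrightarrow> vec.subspace C \<and> (\<forall>c\<in>C. map_matrix emb M *v c \<in> C)"

primrec mat_pow :: "'a::semiring_1^'n^'n \<Rightarrow> nat \<Rightarrow> 'a^'n^'n" where
  "mat_pow M 0 = mat 1"
| "mat_pow M (Suc k) = M ** mat_pow M k"

definition poly_mat :: "'a::comm_ring_1 poly \<Rightarrow> 'a^'n^'n \<Rightarrow> 'a^'n^'n" where
  "poly_mat p M = (\<Sum>i\<le>degree p. mat (coeff p i) ** mat_pow M i)"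

definition min_poly_mat :: "'a::field^'n^'n \<Rightarrow> 'a poly" where
  "min_poly_mat M = (THE p. lead_coeff p = 1 \<and> poly_mat p M = 0 \<and>
       (\<forall>q. q \<noteq> 0 \<and> poly_mat q M = 0 \<longrightarrow> degree p \<le> degree q))"

end

theory Submission
  imports Defs
begin

lemma mat_comm: "(A::'a::comm_semiring_1^'n^'n) ** mat c = mat c ** A"
  by (simp add: matrix_matrix_mult_def mat_def vec_eq_iff if_distrib[of "\<lambda>x. _ * x"] if_distrib[of "\<lambda>x. x * _"] sum.delta' cong: if_cong) (simp add: mult.commute)

lemma mat_mult_mat: "mat (a::'a::comm_semiring_1) ** mat c = (mat (a * c) :: 'a^'n^'n)"
  by (simp add: matrix_matrix_mult_def mat_def vec_eq_iff if_distrib[of "\<lambda>x. _ * x"] sum.delta' cong: if_cong)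

lemma mat_add_mat: "mat (a::'a::comm_semiring_1) + mat c = (mat (a + c) :: 'a^'n^'n)"
  by (simp add: mat_def vec_eq_iff)

lemma matrix_add_rdistrib': "((A::'a::semiring_1^'n^'m) + B) ** C = (A ** C) + (B ** C)"
  by (vector matrix_matrix_mult_def sum.distrib[symmetric] field_simps)

lemma mat_comm2: "mat c ** ((M::'a::comm_semiring_1^'n^'n) ** X) = M ** (mat c ** X)"
  by (metis matrix_mul_assoc mat_comm)

lemma matrix_mul_sum: "(A::'a::comm_semiring_1^'n^'n) ** sum f S = (\<Sum>i\<in>S. A ** f i)"
  by (induction S rule: infinite_finite_induct) (auto simp: matrix_add_ldistrib)

lemma sum_matrix_mul: "sum f S ** (A::'a::comm_semiring_1^'n^'n) = (\<Sum>i\<in>S. f i ** A)"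
  by (induction S rule: infinite_finite_induct) (auto simp: matrix_add_rdistrib')

lemma poly_mat_bound:
  assumes "degree p < N"
  shows "poly_mat p M = (\<Sum>i<N. mat (coeff p i) ** mat_pow M i)"
  unfolding poly_mat_def
proof (rule sum.mono_neutral_left)
  show "\<forall>i\<in>{..<N} - {..degree p}. mat (coeff p i) ** mat_pow M i = 0"
    by (auto simp: coeff_eq_0)
qed (use assms in auto)

lemma poly_mat_pCons: "poly_mat (pCons a p) M = mat a + M ** poly_mat p M"
proof -
  let ?N = "Suc (degree p)"
  have d: "degree (pCons a p) < Suc ?N" by (simp add: degree_pCons_le le_imp_less_Suc)
  have "poly_mat (pCons a p) M = (\<Sum>i<Suc ?N. mat (coeff (pCons a p) i) ** mat_pow M i)"
    by (rule poly_mat_bound[OF d])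
  also have "\<dots> = mat a + (\<Sum>i<?N. mat (coeff p i) ** (M ** mat_pow M i))"
    by (subst sum.lessThan_Suc_shift) simp
  also have "(\<Sum>i<?N. mat (coeff p i) ** (M ** mat_pow M i)) = M ** (\<Sum>i<?N. mat (coeff p i) ** mat_pow M i)"
    by (simp only: matrix_mul_sum mat_comm2)
  also have "(\<Sum>i<?N. mat (coeff p i) ** mat_pow M i) = poly_mat p M"
    by (rule poly_mat_bound[symmetric]) simp
  finally show ?thesis .
qed

lemma poly_mat_0[simp]: "poly_mat 0 M = 0"
  by (simp add: poly_mat_def)

lemma poly_mat_add: "poly_mat (p + q) M = poly_mat p M + poly_mat q M"
proof -
  let ?N = "Suc (max (degree p) (degree q))"
  have "degree (p + q) < ?N" using degree_add_le_max[of p q] by simp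
  then have "poly_mat (p + q) M = (\<Sum>i<?N. mat (coeff (p+q) i) ** mat_pow M i)" by (rule poly_mat_bound)
  also have "\<dots> = (\<Sum>i<?N. mat (coeff p i) ** mat_pow M i) + (\<Sum>i<?N. mat (coeff q i) ** mat_pow M i)"
    by (simp del: sum.lessThan_Suc add: sum.distrib mat_add_mat[symmetric] matrix_add_rdistrib')
  also have "\<dots> = poly_mat p M + poly_mat q M"
    by (simp del: sum.lessThan_Suc add: poly_mat_bound[symmetric])
  finally show ?thesis .
qed

lemma poly_mat_smult: "poly_mat (smult a p) M = mat a ** poly_mat p M"
proof -
  let ?N = "Suc (degree p)"
  have "degree (smult a p) < ?N" using degree_smult_le[of a p] by simp
  then have "poly_mat (smult a p) M = (\<Sum>i<?N. mat (coeff (smult a p) i) ** mat_pow M i)" by (rule poly_mat_bound)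
  also have "\<dots> = mat a ** (\<Sum>i<?N. mat (coeff p i) ** mat_pow M i)"
    by (simp del: sum.lessThan_Suc add: matrix_mul_sum matrix_mul_assoc mat_mult_mat)
  also have "\<dots> = mat a ** poly_mat p M"
    by (simp del: sum.lessThan_Suc add: poly_mat_bound[symmetric])
  finally show ?thesis .
qed

lemma poly_mat_mult: "poly_mat (p * q) M = poly_mat p M ** poly_mat q M"
proof (induction p rule: pCons_induct)
  case 0
  then show ?case by simp
next
  case (pCons a p)
  have "poly_mat (pCons a p * q) M = mat a ** poly_mat q M + M ** poly_mat (p * q) M"
    by (simp add: poly_mat_add poly_mat_smult poly_mat_pCons)
  also have "\<dots> = poly_mat (pCons a p) M ** poly_mat q M"
    by (simp add: pCons.IH poly_mat_pCons matrix_add_rdistrib' matrix_mul_assoc)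
  finally show ?case .
qed

lemma poly_mat_1[simp]: "poly_mat 1 M = mat 1"
  by (simp add: poly_mat_def)

lemma poly_mat_uminus: "poly_mat (- p) M = - poly_mat p M"
  using poly_mat_add[of p "-p" M] by (simp add: add_eq_0_iff2)

lemma poly_mat_diff: "poly_mat (p - q) M = poly_mat p M - poly_mat q M"
  using poly_mat_add[of p "-q" M] by (simp add: poly_mat_uminus)

lemma poly_mat_monom1: "poly_mat (monom 1 j) M = mat_pow M j"
proof (induction j)
  case 0
  then show ?case by (simp add: poly_mat_def)
next
  case (Suc j)
  then show ?case by (simp add: monom_Suc poly_mat_pCons)
qed

lemma poly_mat_monom: "poly_mat (monom c j) M = mat c ** mat_pow M j"
proof -
  have "monom c j = smult c (monom 1 j)" by (simp add: smult_monom)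
  then show ?thesis by (simp add: poly_mat_smult poly_mat_monom1)
qed

lemma poly_mat_sum: "poly_mat (sum f S) M = (\<Sum>i\<in>S. poly_mat (f i) M)"
  by (induction S rule: infinite_finite_induct) (auto simp: poly_mat_add)

definition flat :: "'a::semiring_1^'n^'n \<Rightarrow> 'a^('n \<times> 'n)" where
  "flat A = (\<chi> ij. A $ fst ij $ snd ij)"

lemma flat_add: "flat (A + B) = flat A + flat B"
  by (simp add: flat_def vec_eq_iff)

lemma flat_0: "flat 0 = 0"
  by (simp add: flat_def vec_eq_iff)

lemma flat_sum: "flat (sum f S) = (\<Sum>i\<in>S. flat (f i))"
  by (induction S rule: infinite_finite_induct) (auto simp: flat_add flat_0)

lemma flat_mat_mult: "flat (mat c ** (A::'a::comm_semiring_1^'n^'n)) = c *s flat A"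
  by (simp add: flat_def vec_eq_iff matrix_matrix_mult_def mat_def if_distrib[of "\<lambda>x. x * _"] sum.delta cong: if_cong)

lemma flat_inj: "flat A = flat B \<Longrightarrow> A = B"
  by (simp add: flat_def vec_eq_iff)

lemma mat1_ne0: "(mat 1 :: 'a::{semiring_1,zero_neq_one}^'n^'n) \<noteq> 0"
proof
  assume "(mat 1 :: 'a^'n^'n) = 0"
  then have "vec_nth (vec_nth (mat 1 :: 'a^'n^'n) undefined) undefined = 0" by simp
  then show False by (simp add: mat_def)
qed

lemma ex_annih:
  fixes M :: "'K::field^'n^'n"
  shows "\<exists>q. q \<noteq> 0 \<and> poly_mat q M = 0"
proof -
  define N where "N = CARD('n \<times> 'n)"
  define v where "v i = flat (mat_pow M i)" for i
  show ?thesis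
  proof (cases "inj_on v {..N}")
    case False
    then obtain i j where ij: "i \<noteq> j" "v i = v j" by (auto simp: inj_on_def)
    then have eq: "mat_pow M i = mat_pow M j" using flat_inj v_def by metis
    define q :: "'K poly" where "q = monom 1 i - monom 1 j"
    have "coeff q i = 1" using ij by (simp add: q_def coeff_monom)
    then have "q \<noteq> 0" by auto
    moreover have "poly_mat q M = 0" by (simp add: q_def poly_mat_diff poly_mat_monom1 eq)
    ultimately show ?thesis by blast
  next
    case True
    let ?S = "v ` {..N}"
    have cS: "card ?S = Suc N" using True by (simp add: card_image)
    have "vec.dependent ?S"
    proof (rule ccontr)
      assume ind: "vec.independent ?S"
      have "card ?S \<le> vec.dim ?S" using vec.independent_bound_general[OF ind] by simp
      also have "\<dots> \<le> N" unfolding N_def by (rule dim_subset_UNIV_cart_gen)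
      finally show False using cS by simp
    qed
    then obtain t u where t: "finite t" "t \<subseteq> ?S" "\<exists>w\<in>t. u w \<noteq> 0" "(\<Sum>w\<in>t. u w *s w) = 0"
      unfolding vec.dependent_explicit by blast
    define I where "I = {i\<in>{..N}. v i \<in> t}"
    have tI: "t = v ` I" using t(2) by (auto simp: I_def)
    have injI: "inj_on v I" using True by (rule inj_on_subset) (auto simp: I_def)
    define q :: "'K poly" where "q = (\<Sum>i\<in>I. monom (u (v i)) i)"
    have "flat (poly_mat q M) = (\<Sum>i\<in>I. u (v i) *s v i)"
      by (simp add: q_def poly_mat_sum poly_mat_monom flat_sum flat_mat_mult v_def)
    also have "\<dots> = (\<Sum>w\<in>t. u w *s w)" unfolding tI by (simp add: sum.reindex[OF injI])
    also have "\<dots> = flat 0" using t(4) flat_0 by simp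
    finally have "poly_mat q M = 0" by (rule flat_inj)
    moreover obtain i0 where i0: "i0 \<in> I" "u (v i0) \<noteq> 0" using t(3) tI by auto
    have "finite I" by (simp add: I_def)
    then have "coeff q i0 = u (v i0)" using i0 by (simp add: q_def coeff_sum coeff_monom)
    then have "q \<noteq> 0" using i0 by auto
    ultimately show ?thesis by blast
  qed
qed

lemma min_poly_props:
  fixes M :: "'K::field^'n^'n"
  shows "lead_coeff (min_poly_mat M) = 1 \<and> poly_mat (min_poly_mat M) M = 0 \<and>
     (\<forall>q. q \<noteq> 0 \<and> poly_mat q M = 0 \<longrightarrow> degree (min_poly_mat M) \<le> degree q)"
proof -
  let ?P = "\<lambda>p. lead_coeff p = 1 \<and> poly_mat p M = 0 \<and>
       (\<forall>q. q \<noteq> 0 \<and> poly_mat q M = 0 \<longrightarrow> degree p \<le> degree q)"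
  obtain q1 where "q1 \<noteq> 0 \<and> poly_mat q1 M = 0" using ex_annih by blast
  then obtain q0 where q0: "q0 \<noteq> 0 \<and> poly_mat q0 M = 0"
    and q0min: "\<forall>q. q \<noteq> 0 \<and> poly_mat q M = 0 \<longrightarrow> degree q0 \<le> degree q"
    using ex_has_least_nat[of "\<lambda>q. q \<noteq> 0 \<and> poly_mat q M = 0" q1 degree] by blast
  define p where "p = smult (inverse (lead_coeff q0)) q0"
  have Pp: "?P p"
  proof (intro conjI)
    show "lead_coeff p = 1" using q0 by (simp add: p_def)
    show "poly_mat p M = 0" using q0 by (simp add: p_def poly_mat_smult)
    show "\<forall>q. q \<noteq> 0 \<and> poly_mat q M = 0 \<longrightarrow> degree p \<le> degree q"
      using q0min by (simp add: p_def)
  qed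
  have uniq: "p' = p" if "?P p'" for p'
  proof (rule ccontr)
    assume ne: "p' \<noteq> p"
    have "p \<noteq> 0" "p' \<noteq> 0" using Pp that by auto
    then have deq: "degree p = degree p'" using Pp that by (meson le_antisym)
    define d where "d = p - p'"
    have "d \<noteq> 0" using ne by (simp add: d_def)
    moreover have "poly_mat d M = 0" using Pp that by (simp add: d_def poly_mat_diff)
    ultimately have "degree p \<le> degree d" using Pp by blast
    moreover have "degree d \<le> degree p" using deq degree_diff_le by (metis d_def max.idem degree_diff_le_max)
    moreover have "coeff d (degree p) = 0" using Pp that deq by (simp add: d_def)
    ultimately show False using \<open>d \<noteq> 0\<close> by (metis le_antisym leading_coeff_0_iff)
  qed
  have "min_poly_mat M = p"
    unfolding min_poly_mat_def using Pp uniq by (rule the_equality)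
  then show ?thesis using Pp by simp
qed

lemma min_poly_degree:
  fixes M :: "'K::field^'n^'n"
  shows "degree (min_poly_mat M) \<ge> 1"
proof (rule ccontr)
  assume "\<not> ?thesis"
  then have "degree (min_poly_mat M) = 0" by simp
  then have "min_poly_mat M = [:lead_coeff (min_poly_mat M):]" by (metis degree_0_id)
  then have "min_poly_mat M = 1" using min_poly_props[of M] by (simp add: one_pCons)
  then show False using min_poly_props[of M] mat1_ne0 by auto
qed

lemma irr_factor:
  fixes \<mu> :: "'K::field poly"
  assumes "degree \<mu> \<ge> 1"
  shows "\<exists>\<pi>. \<pi> dvd \<mu> \<and> irreducible \<pi> \<and> lead_coeff \<pi> = 1"
proof -
  let ?D = "\<lambda>q. q dvd \<mu> \<and> degree q \<ge> 1"
  have "\<exists>x. ?D x \<and> (\<forall>y. ?D y \<longrightarrow> degree x \<le> degree y)"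
    by (rule ex_has_least_nat[where k=\<mu>]) (use assms in simp)
  then obtain q0 where q0: "?D q0" and q0min: "\<forall>q. ?D q \<longrightarrow> degree q0 \<le> degree q"
    by blast
  have q0nz: "q0 \<noteq> 0" using q0 by auto
  define \<pi> where "\<pi> = smult (inverse (lead_coeff q0)) q0"
  have lc: "lead_coeff \<pi> = 1" using q0nz by (simp add: \<pi>_def)
  have pnz: "\<pi> \<noteq> 0" using lc by auto
  have dpi: "degree \<pi> = degree q0" by (simp add: \<pi>_def)
  have pdq: "\<pi> dvd q0" unfolding \<pi>_def by (simp add: smult_dvd_iff)
  have pdvd: "\<pi> dvd \<mu>" by (rule dvd_trans[OF pdq]) (use q0 in simp)
  have "irreducible \<pi>"
    unfolding irreducible_def
  proof (intro conjI allI impI)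
    show "\<pi> \<noteq> 0" by fact
    show "\<not> \<pi> dvd 1" using is_unit_iff_degree[OF pnz] dpi q0 by simp
    fix a b assume ab: "\<pi> = a * b"
    then have anz: "a \<noteq> 0" and bnz: "b \<noteq> 0" using pnz by auto
    have dab: "degree \<pi> = degree a + degree b" using ab anz bnz degree_mult_eq by blast
    show "a dvd 1 \<or> b dvd 1"
    proof (rule ccontr)
      assume "\<not> (a dvd 1 \<or> b dvd 1)"
      then have "degree a \<ge> 1" "degree b \<ge> 1" using is_unit_iff_degree[OF anz] is_unit_iff_degree[OF bnz] by auto
      moreover have "a dvd \<mu>" using ab pdvd dvd_trans dvd_triv_left by metis
      ultimately have "degree q0 \<le> degree a" using q0min by blast
      then show False using dab dpi \<open>degree b \<ge> 1\<close> by linarith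
    qed
  qed
  then show ?thesis using pdvd lc by blast
qed

lemma pow_split:
  fixes \<mu> \<pi> :: "'K::field poly"
  assumes "degree \<pi> \<ge> 1" "\<mu> \<noteq> 0"
  shows "\<exists>l g. \<mu> = \<pi>^l * g \<and> \<not> \<pi> dvd g"
  using assms(2)
proof (induction "degree \<mu>" arbitrary: \<mu> rule: less_induct)
  case less
  show ?case
  proof (cases "\<pi> dvd \<mu>")
    case False
    then show ?thesis by (intro exI[of _ 0] exI[of _ \<mu>]) simp
  next
    case True
    then obtain \<mu>' where m: "\<mu> = \<pi> * \<mu>'" by (auto elim: dvdE)
    have nz: "\<mu>' \<noteq> 0" "\<pi> \<noteq> 0" using m less.prems by auto
    have "degree \<mu> = degree \<pi> + degree \<mu>'" using m nz degree_mult_eq by blast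
    then have "degree \<mu>' < degree \<mu>" using assms(1) by linarith
    then obtain l g where "\<mu>' = \<pi>^l * g" "\<not> \<pi> dvd g" using less.hyps nz by blast
    then have "\<mu> = \<pi>^Suc l * g" using m by (simp add: mult.assoc)
    then show ?thesis using \<open>\<not> \<pi> dvd g\<close> by blast
  qed
qed

lemma bezout_irr:
  fixes \<pi> g :: "'K::field poly"
  assumes irr: "irreducible \<pi>" and nd: "\<not> \<pi> dvd g"
  shows "\<exists>a c. a * \<pi> + c * g = 1"
proof -
  let ?I = "\<lambda>h. h \<noteq> 0 \<and> (\<exists>a c. h = a * \<pi> + c * g)"
  have gnz: "g \<noteq> 0" using nd by auto
  have "?I g" using gnz by (metis add_0 mult_1 mult_zero_left)
  then have "\<exists>x. ?I x \<and> (\<forall>y. ?I y \<longrightarrow> degree x \<le> degree y)"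
    by (rule ex_has_least_nat)
  then obtain h where h: "?I h" and hmin: "\<forall>h'. ?I h' \<longrightarrow> degree h \<le> degree h'"
    by blast
  obtain a0 c0 where hdef: "h = a0 * \<pi> + c0 * g" using h by blast
  have divs: "h dvd x" if ex: "\<exists>a c. x = a * \<pi> + c * g" for x
  proof (rule ccontr)
    assume nd': "\<not> h dvd x"
    obtain a c where x: "x = a * \<pi> + c * g" using ex by blast
    have r: "x mod h = (a - x div h * a0) * \<pi> + (c - x div h * c0) * g"
    proof -
      have "x mod h = x - x div h * h" by (metis add_diff_cancel_left' div_mult_mod_eq)
      then show ?thesis by (simp add: x hdef algebra_simps)
    qed
    have "x mod h \<noteq> 0" using nd' mod_eq_0_iff_dvd by blast
    then have "?I (x mod h)" using r by blast
    then have "degree h \<le> degree (x mod h)" using hmin by blast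
    moreover have "degree (x mod h) < degree h" using degree_mod_less h \<open>x mod h \<noteq> 0\<close> by blast
    ultimately show False by linarith
  qed
  have "h dvd \<pi>" by (rule divs) (metis add_0_right mult_1 mult_zero_left)
  then obtain k where k: "\<pi> = h * k" by (auto elim: dvdE)
  have "h dvd g" by (rule divs) (metis add_0 mult_1 mult_zero_left)
  have "is_unit h"
  proof (rule ccontr)
    assume "\<not> is_unit h"
    then have "is_unit k" using irr k unfolding irreducible_def by blast
    then have "\<pi> dvd g" using k \<open>h dvd g\<close> by (simp add: mult_unit_dvd_iff)
    then show False using nd by blast
  qed
  then obtain h' where "1 = h * h'" by (auto elim: dvdE)
  then have "(h' * a0) * \<pi> + (h' * c0) * g = 1" by (simp add: hdef algebra_simps)
  then show ?thesis by blast
qed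

lemma bezout_pow:
  fixes \<pi> g :: "'K::field poly"
  assumes "a * \<pi> + c * g = 1"
  shows "\<exists>s t. s * \<pi>^l + t * g = 1"
proof (induction l)
  case 0
  then show ?case by (metis add.right_neutral mult_1 mult_zero_left power_0)
next
  case (Suc l)
  then obtain s t where st: "s * \<pi>^l + t * g = 1" by blast
  have "1 = (s * \<pi>^l + t * g) * (a * \<pi> + c * g)" using st assms by simp
  also have "\<dots> = (s * a) * \<pi>^Suc l + (s * \<pi>^l * c + t * a * \<pi> + t * c * g) * g"
    by (simp add: algebra_simps)
  finally show ?case by metis
qed

lemma factor_or_split:
  fixes \<mu> :: "'K::field poly"
  assumes lc: "lead_coeff \<mu> = 1" and dg: "degree \<mu> \<ge> 1"
  shows "(\<exists>\<pi> l. l \<ge> 1 \<and> lead_coeff \<pi> = 1 \<and> irreducible \<pi> \<and> \<mu> = \<pi>^l) \<or>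
         (\<exists>f g s t. \<mu> = f * g \<and> degree f \<ge> 1 \<and> degree g \<ge> 1 \<and> s * f + t * g = 1)"
proof -
  obtain \<pi> where \<pi>: "\<pi> dvd \<mu>" "irreducible \<pi>" "lead_coeff \<pi> = 1"
    using irr_factor[OF dg] by blast
  have pnz: "\<pi> \<noteq> 0" using \<pi> by auto
  have dp: "degree \<pi> \<ge> 1" using \<pi>(2) is_unit_iff_degree[OF pnz] unfolding irreducible_def by simp
  have mnz: "\<mu> \<noteq> 0" using lc by auto
  obtain l g where lg: "\<mu> = \<pi>^l * g" "\<not> \<pi> dvd g" using pow_split[OF dp mnz] by blast
  have l1: "l \<ge> 1"
  proof (rule ccontr)
    assume "\<not> l \<ge> 1"
    then have "l = 0" by simp
    then show False using lg \<pi>(1) by simp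
  qed
  have gnz: "g \<noteq> 0" using lg mnz by auto
  show ?thesis
  proof (cases "degree g = 0")
    case True
    then have g: "g = [:lead_coeff g:]" by (metis degree_0_id)
    have "lead_coeff \<mu> = lead_coeff g" using lg \<pi>(3) by (simp add: lead_coeff_mult lead_coeff_power)
    then have "g = 1" using g lc by (simp add: one_pCons)
    then show ?thesis using lg l1 \<pi> by auto
  next
    case False
    obtain a c where "a * \<pi> + c * g = 1" using bezout_irr[OF \<pi>(2) lg(2)] by blast
    then obtain s t where st: "s * \<pi>^l + t * g = 1" using bezout_pow by blast
    have "degree (\<pi>^l) \<ge> 1" using pnz dp l1 by (simp add: degree_power_eq)
    moreover have "degree g \<ge> 1" using False by simp
    ultimately show ?thesis using lg st by blast
  qed
qed

locale ext_setup =
  fixes emb :: "'K::field \<Rightarrow> 'L::field" and b :: "'m::finite \<Rightarrow> 'L"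
  assumes fe: "field_emb emb" and kb: "is_K_basis emb b"
begin

lemma emb_add: "emb (x + y) = emb x + emb y" using fe by (simp add: field_emb_def)
lemma emb_mult: "emb (x * y) = emb x * emb y" using fe by (simp add: field_emb_def)
lemma emb_1: "emb 1 = 1" using fe by (simp add: field_emb_def)
lemma emb_0: "emb 0 = 0" using emb_add[of 0 0] by (metis add.right_neutral add_left_cancel)
lemma emb_sum: "emb (sum f S) = (\<Sum>i\<in>S. emb (f i))"
  by (induction S rule: infinite_finite_induct) (auto simp: emb_0 emb_add)
lemma emb_uminus: "emb (- x) = - emb x"
  using emb_add[of x "-x"] by (metis add.right_inverse emb_0 add_left_cancel)
lemma emb_diff: "emb (x - y) = emb x - emb y"
  using emb_add[of x "-y"] by (simp add: emb_uminus)
lemma emb_eq0: "emb x = 0 \<Longrightarrow> x = 0"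
proof (rule ccontr)
  assume "emb x = 0" "x \<noteq> 0"
  then have "emb x * emb (inverse x) = 0" by simp
  then have "emb (x * inverse x) = 0" by (simp only: emb_mult)
  then show False using \<open>x \<noteq> 0\<close> by (simp add: emb_1)
qed
lemma emb_inj: "emb x = emb y \<Longrightarrow> x = y"
  using emb_eq0[of "x - y"] by (simp add: emb_diff)

lemma coord_eq: "l = (\<Sum>i\<in>UNIV. emb (coord emb b l $ i) * b i)"
proof -
  have "\<exists>!a::'K^'m. l = (\<Sum>i\<in>UNIV. emb (a $ i) * b i)" using kb by (simp add: is_K_basis_def)
  then show ?thesis unfolding coord_def by (rule theI')
qed

lemma coord_unique: "l = (\<Sum>i\<in>UNIV. emb (a $ i) * b i) \<Longrightarrow> coord emb b l = a"
proof -
  assume h: "l = (\<Sum>i\<in>UNIV. emb (a $ i) * b i)"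
  have "\<exists>!a::'K^'m. l = (\<Sum>i\<in>UNIV. emb (a $ i) * b i)" using kb by (simp add: is_K_basis_def)
  then show ?thesis unfolding coord_def using h by (rule the1_equality)
qed

lemma coord_add: "coord emb b (x + y) = coord emb b x + coord emb b y"
proof (rule coord_unique)
  show "x + y = (\<Sum>i\<in>UNIV. emb ((coord emb b x + coord emb b y) $ i) * b i)"
    by (subst coord_eq[of x], subst coord_eq[of y]) (simp add: emb_add distrib_right sum.distrib)
qed

lemma coord_scale: "coord emb b (emb a * x) = a *s coord emb b x"
proof (rule coord_unique)
  show "emb a * x = (\<Sum>i\<in>UNIV. emb ((a *s coord emb b x) $ i) * b i)"
    by (subst coord_eq[of x]) (simp add: emb_mult sum_distrib_left mult.assoc)
qed

lemma coord_scale': "coord emb b (x * emb a) = a *s coord emb b x"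
  using coord_scale by (simp add: mult.commute)

lemma coord_0: "coord emb b 0 = 0"
  by (rule coord_unique) (simp add: emb_0)

lemma coord_sum: "coord emb b (sum f S) = (\<Sum>i\<in>S. coord emb b (f i))"
  by (induction S rule: infinite_finite_induct) (auto simp: coord_0 coord_add)

lemma coord_eq0: "coord emb b x = 0 \<Longrightarrow> x = 0"
  using coord_eq[of x] by (simp add: emb_0)

definition emb_vec :: "'K^'n \<Rightarrow> 'L^'n" where
  "emb_vec u = (\<chi> j. emb (u $ j))"

lemma emb_vec_add: "emb_vec (x + y) = emb_vec x + emb_vec y"
  by (simp add: emb_vec_def vec_eq_iff emb_add)
lemma emb_vec_scale: "emb_vec (a *s x) = emb a *s emb_vec x"
  by (simp add: emb_vec_def vec_eq_iff emb_mult)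
lemma emb_vec_0: "emb_vec 0 = 0"
  by (simp add: emb_vec_def vec_eq_iff emb_0)
lemma emb_vec_sum: "emb_vec (sum f S) = (\<Sum>i\<in>S. emb_vec (f i))"
  by (induction S rule: infinite_finite_induct) (auto simp: emb_vec_0 emb_vec_add)
lemma emb_vec_inj: "inj emb_vec"
  by (rule injI) (simp add: emb_vec_def vec_eq_iff emb_inj)

lemma row_cm: "row i (coord_matrix emb b c) = (\<chi> j. coord emb b (c $ j) $ i)"
  by (simp add: row_def coord_matrix_def)

lemma row_cm_G:
  assumes "finite T"
  shows "row i (coord_matrix emb b (\<Sum>k\<in>T. lam k *s emb_vec (u k))) = (\<Sum>k\<in>T. (coord emb b (lam k) $ i) *s u k)"
  unfolding row_cm vec_eq_iff
proof (intro allI)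
  fix j
  have "(\<Sum>k\<in>T. lam k *s emb_vec (u k)) $ j = (\<Sum>k\<in>T. lam k * emb (u k $ j))"
    by (simp add: sum_component emb_vec_def)
  then have "coord emb b ((\<Sum>k\<in>T. lam k *s emb_vec (u k)) $ j) $ i = (\<Sum>k\<in>T. (u k $ j) * coord emb b (lam k) $ i)"
    by (simp add: coord_sum coord_scale' sum_component)
  then show "(\<chi> j. coord emb b ((\<Sum>k\<in>T. lam k *s emb_vec (u k)) $ j) $ i) $ j = (\<Sum>k\<in>T. (coord emb b (lam k) $ i) *s u k) $ j"
    by (simp add: sum_component mult.commute)
qed

lemma recon: "c = (\<Sum>k\<in>UNIV. b k *s emb_vec (row k (coord_matrix emb b c)))"
unfolding vec_eq_iff proof (intro allI)
  fix j
  show "c $ j = (\<Sum>k\<in>UNIV. b k *s emb_vec (row k (coord_matrix emb b c))) $ j"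
    by (subst coord_eq[of "c $ j"]) (simp add: sum_component emb_vec_def row_cm mult.commute)
qed

lemma row_cm_mat:
  "row i (coord_matrix emb b (map_matrix emb A *v c)) = A *v row i (coord_matrix emb b c)"
  unfolding row_cm vec_eq_iff
proof (intro allI)
  fix j
  show "(\<chi> j. coord emb b ((map_matrix emb A *v c) $ j) $ i) $ j = (A *v (\<chi> j. coord emb b (c $ j) $ i)) $ j"
    by (simp add: coord_sum coord_scale sum_component matrix_vector_mult_def)
qed

definition ext :: "('K^'n) set \<Rightarrow> ('L^'n) set" where
  "ext U = {c. \<forall>i. row i (coord_matrix emb b c) \<in> U}"

lemma ext_span:
  assumes U: "vec.subspace U"
  shows "ext U = vec.span (emb_vec ` U)"
proof
  show "ext U \<subseteq> vec.span (emb_vec ` U)"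
  proof
    fix c assume "c \<in> ext U"
    then have r: "row k (coord_matrix emb b c) \<in> U" for k by (simp add: ext_def)
    have "(\<Sum>k\<in>UNIV. b k *s emb_vec (row k (coord_matrix emb b c))) \<in> vec.span (emb_vec ` U)"
      by (intro vec.span_sum vec.span_scale vec.span_base imageI r)
    then show "c \<in> vec.span (emb_vec ` U)" using recon[of c] by simp
  qed
next
  show "vec.span (emb_vec ` U) \<subseteq> ext U"
  proof
    fix c assume "c \<in> vec.span (emb_vec ` U)"
    then obtain t r where t: "finite t" "t \<subseteq> emb_vec ` U" "c = (\<Sum>a\<in>t. r a *s a)"
      unfolding vec.span_explicit by blast
    obtain t' where t': "t' \<subseteq> U" "finite t'" "t = emb_vec ` t'"
      using finite_subset_image[OF t(1) t(2)] by blast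
    have inj: "inj_on emb_vec t'" using emb_vec_inj by (metis inj_on_subset subset_UNIV)
    have c: "c = (\<Sum>x\<in>t'. r (emb_vec x) *s emb_vec x)"
      using t(3) t'(3) by (simp add: sum.reindex[OF inj])
    have "row i (coord_matrix emb b c) \<in> U" for i
      unfolding c row_cm_G[OF t'(2)]
      by (rule vec.subspace_sum[OF U]) (use t'(1) vec.subspace_scale[OF U] in blast)
    then show "c \<in> ext U" by (simp add: ext_def)
  qed
qed

lemma ext_subspace: "vec.subspace U \<Longrightarrow> vec.subspace (ext U)"
  by (simp add: ext_span)

lemma ext_mono: "U \<subseteq> V \<Longrightarrow> ext U \<subseteq> ext V"
  by (auto simp: ext_def)

lemma row_cm_0: "row i (coord_matrix emb b 0) = 0"
  by (simp add: row_cm coord_0 vec_eq_iff)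

lemma ext_zero: "ext {0} = {0}"
proof
  show "ext {0} \<subseteq> {0}"
  proof
    fix c assume "c \<in> ext {0}"
    then have "row k (coord_matrix emb b c) = 0" for k by (simp add: ext_def)
    then show "c \<in> {0}" using recon[of c] by (simp add: emb_vec_0)
  qed
  show "{0} \<subseteq> ext {0}" by (simp add: ext_def row_cm_0)
qed

lemma indep_coeffs:
  fixes B :: "('K^'n) set"
  assumes "vec.independent B" "S \<subseteq> B" "finite S" "(\<Sum>v\<in>S. u v *s v) = 0" "v \<in> S"
  shows "u v = 0"
  using assms unfolding vec.independent_explicit_finite_subsets by auto

lemma dim_ext:
  assumes U: "vec.subspace U"
  shows "vec.dim (ext U) = vec.dim U"
proof -
  obtain B where B: "B \<subseteq> U" "vec.independent B" "U \<subseteq> vec.span B" "card B = vec.dim U"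
    using vec.basis_exists by blast
  have inj: "inj_on emb_vec B" using emb_vec_inj by (metis inj_on_subset subset_UNIV)
  have sp: "ext U = vec.span (emb_vec ` B)"
  proof
    show "vec.span (emb_vec ` B) \<subseteq> ext U"
      unfolding ext_span[OF U] using B(1) by (intro vec.span_mono image_mono)
    have "emb_vec ` U \<subseteq> vec.span (emb_vec ` B)"
    proof
      fix y assume "y \<in> emb_vec ` U"
      then obtain u where u: "u \<in> U" "y = emb_vec u" by blast
      then have "u \<in> vec.span B" using B(3) by blast
      then obtain t r where t: "finite t" "t \<subseteq> B" "u = (\<Sum>a\<in>t. r a *s a)"
        unfolding vec.span_explicit by blast
      have "y = (\<Sum>a\<in>t. emb (r a) *s emb_vec a)"
        using u(2) t(3) by (simp add: emb_vec_sum emb_vec_scale)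
      also have "\<dots> \<in> vec.span (emb_vec ` B)"
        using t(2) by (intro vec.span_sum vec.span_scale vec.span_base) blast
      finally show "y \<in> vec.span (emb_vec ` B)" .
    qed
    then show "ext U \<subseteq> vec.span (emb_vec ` B)"
      unfolding ext_span[OF U] by (rule vec.span_minimal) simp
  qed
  have ind: "vec.independent (emb_vec ` B)"
    unfolding vec.independent_explicit_finite_subsets
  proof (intro allI impI ballI)
    fix S w v
    assume S: "S \<subseteq> emb_vec ` B" "finite S" and sw: "(\<Sum>v\<in>S. w v *s v) = 0" and v: "v \<in> S"
    obtain S' where S': "S' \<subseteq> B" "finite S'" "S = emb_vec ` S'"
      using finite_subset_image[OF S(2) S(1)] by blast
    have injS: "inj_on emb_vec S'" using inj S'(1) inj_on_subset by blast
    have sw': "(\<Sum>x\<in>S'. w (emb_vec x) *s emb_vec x) = 0"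
      using sw S'(3) by (simp add: sum.reindex[OF injS])
    have "coord emb b (w (emb_vec x)) $ i = 0" if x: "x \<in> S'" for x i
    proof -
      have "(\<Sum>x\<in>S'. (coord emb b (w (emb_vec x)) $ i) *s x) = 0"
        using row_cm_G[OF S'(2), of i "\<lambda>x. w (emb_vec x)" "\<lambda>x. x"] sw' by (simp add: row_cm_0)
      then show ?thesis
        by (rule indep_coeffs[OF B(2) S'(1) S'(2) _ x])
    qed
    then have "coord emb b (w (emb_vec x)) = 0" if "x \<in> S'" for x
      using that by (simp add: vec_eq_iff)
    then have "w (emb_vec x) = 0" if "x \<in> S'" for x
      using that coord_eq0 by blast
    then show "w v = 0" using v S'(3) by blast
  qed
  have "vec.dim (ext U) = card (emb_vec ` B)"
    unfolding sp by (rule vec.dim_span_eq_card_independent[OF ind])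
  also have "\<dots> = card B" by (rule card_image[OF inj])
  finally show ?thesis using B(4) by simp
qed

lemma Rsupp_sub: "vec.subspace U \<Longrightarrow> c \<in> ext U \<Longrightarrow> Rsupp emb b c \<subseteq> U"
  unfolding Rsupp_def by (rule vec.span_minimal) (auto simp: ext_def)

lemma wt_le:
  fixes C :: "('L^'n) set"
  assumes C: "vec.subspace C" and U: "vec.subspace U"
    and c: "c \<in> C" "c \<noteq> 0" "c \<in> ext U"
  shows "gen_rank_weight emb b 1 C \<le> vec.dim U"
proof -
  define D where "D = vec.span {c}"
  have Dsub: "vec.subspace D" by (simp add: D_def)
  have DC: "D \<subseteq> C" unfolding D_def using c(1) C by (intro vec.span_minimal) auto
  have dD: "vec.dim D = 1"
    unfolding D_def using c(2) by (subst vec.dim_span_eq_card_independent) auto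
  have DU: "D \<subseteq> ext U" unfolding D_def using c(3) ext_subspace[OF U] by (intro vec.span_minimal) auto
  have "(\<Union>d\<in>D. Rsupp emb b d) \<subseteq> U" using DU Rsupp_sub[OF U] by blast
  then have "vec.span (\<Union>d\<in>D. Rsupp emb b d) \<subseteq> U" using U by (rule vec.span_minimal)
  then have w: "wtR_space emb b D \<le> vec.dim U" unfolding wtR_space_def by (rule vec.dim_subset)
  let ?S = "{wtR_space emb b D | D. vec.subspace D \<and> D \<subseteq> C \<and> vec.dim D = 1}"
  have "?S \<subseteq> {..CARD('n)}" by (auto simp: wtR_space_def dim_subset_UNIV_cart_gen)
  then have fin: "finite ?S" by (rule finite_subset) simp
  have "wtR_space emb b D \<in> ?S" using Dsub DC dD by blast
  then have "Min ?S \<le> wtR_space emb b D" using fin by (rule Min_le[rotated])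
  then show ?thesis using w unfolding gen_rank_weight_def by simp
qed

lemma local_singleton:
  fixes C :: "('L^'n) set"
  assumes C: "vec.subspace C" and V: "vec.subspace V" and D: "vec.subspace D"
    and DC: "D \<subseteq> C" and DV: "D \<subseteq> ext V" and k1: "vec.dim D \<ge> 1"
  shows "gen_rank_weight emb b 1 C + vec.dim D \<le> vec.dim V + 1"
proof -
  define n1 where "n1 = vec.dim V"
  define k where "k = vec.dim D"
  have kn: "k \<le> n1" unfolding k_def n1_def using vec.dim_subset[OF DV] dim_ext[OF V] by simp
  obtain B where B: "B \<subseteq> V" "vec.independent B" "V \<subseteq> vec.span B" "card B = n1"
    using vec.basis_exists n1_def by blast
  have "n1 - k + 1 \<le> card B" using B(4) kn k1 k_def by simp
  then obtain B' where B': "B' \<subseteq> B" "card B' = n1 - k + 1" "finite B'"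
    by (rule obtain_subset_with_card_n)
  define U where "U = vec.span B'"
  have Us: "vec.subspace U" by (simp add: U_def)
  have indB': "vec.independent B'" using B(2) B'(1) vec.independent_mono by blast
  have dU: "vec.dim U = n1 - k + 1"
    unfolding U_def using vec.dim_span_eq_card_independent[OF indB'] B'(2) by simp
  have UV: "U \<subseteq> V" unfolding U_def using B(1) B'(1) V by (intro vec.span_minimal) auto
  have eU: "vec.subspace (ext U)" by (rule ext_subspace[OF Us])
  have eV: "vec.subspace (ext V)" by (rule ext_subspace[OF V])
  have sums: "{x + y |x y. x \<in> D \<and> y \<in> ext U} \<subseteq> ext V"
    using DV ext_mono[OF UV] by (auto intro!: vec.subspace_add[OF eV])
  have "vec.dim {x + y |x y. x \<in> D \<and> y \<in> ext U} \<le> n1"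
    using vec.dim_subset[OF sums] dim_ext[OF V] n1_def by simp
  moreover have "vec.dim {x + y |x y. x \<in> D \<and> y \<in> ext U} + vec.dim (D \<inter> ext U) = k + (n1 - k + 1)"
    using vec.dim_sums_Int[OF D eU] dim_ext[OF Us] dU k_def by simp
  ultimately have "vec.dim (D \<inter> ext U) \<ge> 1" using kn by linarith
  then have "\<not> D \<inter> ext U \<subseteq> {0}" by (metis vec.dim_eq_0 not_one_le_zero)
  then obtain c where "c \<in> D" "c \<in> ext U" "c \<noteq> 0" by blast
  then have "gen_rank_weight emb b 1 C \<le> vec.dim U" using wt_le[OF C Us] DC by blast
  then show ?thesis using dU kn k_def n1_def by linarith
qed

end

lemma ker_subspace: "vec.subspace {x. (A::'a::field^'n^'m) *v x = 0}"
  unfolding vec.subspace_def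
  by (auto simp: matrix_vector_right_distrib vec.scale)

context ext_setup
begin

lemma map_matrix_add: "map_matrix emb (A + B) = map_matrix emb A + map_matrix emb B"
  by (simp add: map_matrix_def vec_eq_iff emb_add)

lemma map_matrix_mult: "map_matrix emb (A ** B) = map_matrix emb A ** map_matrix emb B"
  by (simp add: map_matrix_def vec_eq_iff matrix_matrix_mult_def emb_sum emb_mult)

lemma map_matrix_mat: "map_matrix emb (mat a) = mat (emb a)"
  by (simp add: map_matrix_def vec_eq_iff mat_def emb_0)

lemma map_matrix_0: "map_matrix emb 0 = 0"
  by (simp add: map_matrix_def vec_eq_iff emb_0)

lemma mat_mult_vec: "mat a *v c = a *s c"
  by (simp add: vec_eq_iff matrix_vector_mult_def mat_def if_distrib[of "\<lambda>x. x * _"] sum.delta cong: if_cong)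

lemma code_inv:
  assumes Mc: "is_M_code emb M C" and c: "c \<in> C"
  shows "map_matrix emb (poly_mat p M) *v c \<in> C"
  using c
proof (induction p arbitrary: c rule: pCons_induct)
  case 0
  have "vec.subspace C" using Mc by (simp add: is_M_code_def)
  then show ?case by (simp add: map_matrix_0 vec.subspace_0)
next
  case (pCons a p)
  have sC: "vec.subspace C" using Mc by (simp add: is_M_code_def)
  have "map_matrix emb (poly_mat (pCons a p) M) *v c =
        emb a *s c + map_matrix emb M *v (map_matrix emb (poly_mat p M) *v c)"
    by (simp add: poly_mat_pCons map_matrix_add map_matrix_mult map_matrix_mat mat_mult_vec
        matrix_vector_mult_add_rdistrib matrix_vector_mul_assoc)
  also have "\<dots> \<in> C"
  proof (rule vec.subspace_add[OF sC])
    show "emb a *s c \<in> C" using pCons.prems by (rule vec.subspace_scale[OF sC])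
    have "map_matrix emb (poly_mat p M) *v c \<in> C" using pCons.IH pCons.prems by blast
    then show "map_matrix emb M *v (map_matrix emb (poly_mat p M) *v c) \<in> C"
      using Mc by (simp add: is_M_code_def)
  qed
  finally show ?case .
qed

lemma decomp_false:
  fixes M :: "'K^'n^'n" and C :: "('L^'n) set"
  assumes Mc: "is_M_code emb M C" and C0: "C \<noteq> {0}" and CU: "C \<noteq> UNIV"
    and mrd: "gen_rank_weight emb b 1 C = CARD('n) - vec.dim C + 1"
    and fg0: "poly_mat (f * g) M = 0" and bez: "s * f + t * g = 1"
    and V1ne: "{x. poly_mat f M *v x = 0} \<noteq> {0}" and V2ne: "{x. poly_mat g M *v x = 0} \<noteq> {0}"
  shows False
proof -
  define F where "F = poly_mat f M"
  define G where "G = poly_mat g M"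
  define P1 where "P1 = poly_mat (t * g) M"
  define P2 where "P2 = poly_mat (s * f) M"
  define V1 where "V1 = {x. F *v x = 0}"
  define V2 where "V2 = {x. G *v x = 0}"
  have sC: "vec.subspace C" using Mc by (simp add: is_M_code_def)
  have hP: "P1 + P2 = mat 1"
    unfolding P1_def P2_def poly_mat_add[symmetric] using bez by (simp add: add.commute)
  have FP1: "F ** P1 = 0"
  proof -
    have "F ** P1 = poly_mat (t * (f * g)) M" unfolding F_def P1_def poly_mat_mult[symmetric]
      by (simp add: algebra_simps)
    then show ?thesis using fg0 by (simp add: poly_mat_mult)
  qed
  have GP2: "G ** P2 = 0"
  proof -
    have "G ** P2 = poly_mat (s * (f * g)) M" unfolding G_def P2_def poly_mat_mult[symmetric]
      by (simp add: algebra_simps)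
    then show ?thesis using fg0 by (simp add: poly_mat_mult)
  qed
  have P1G: "P1 = poly_mat t M ** G" unfolding P1_def G_def by (simp add: poly_mat_mult)
  have P2F: "P2 = poly_mat s M ** F" unfolding P2_def F_def by (simp add: poly_mat_mult)
  have sV1: "vec.subspace V1" unfolding V1_def by (rule ker_subspace)
  have sV2: "vec.subspace V2" unfolding V2_def by (rule ker_subspace)
  have splitx: "x = P1 *v x + P2 *v x" for x :: "'K^'n"
    by (metis hP matrix_vector_mult_add_rdistrib matrix_vector_mul_lid)
  have P1V1: "P1 *v x \<in> V1" for x
    unfolding V1_def by (simp add: matrix_vector_mul_assoc FP1)
  have P2V2: "P2 *v x \<in> V2" for x
    unfolding V2_def by (simp add: matrix_vector_mul_assoc GP2)
  have V12: "V1 \<inter> V2 = {0}"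
  proof
    show "V1 \<inter> V2 \<subseteq> {0}"
    proof
      fix x assume x: "x \<in> V1 \<inter> V2"
      have "x = P1 *v x + P2 *v x" by (rule splitx)
      also have "\<dots> = poly_mat t M *v (G *v x) + poly_mat s M *v (F *v x)"
        by (simp add: P1G P2F matrix_vector_mul_assoc)
      also have "\<dots> = 0" using x by (simp add: V1_def V2_def)
      finally show "x \<in> {0}" by simp
    qed
    show "{0} \<subseteq> V1 \<inter> V2" using sV1 sV2 by (simp add: vec.subspace_0)
  qed
  have sumsK: "{x + y |x y. x \<in> V1 \<and> y \<in> V2} = UNIV"
  proof -
    have "x \<in> {x + y |x y. x \<in> V1 \<and> y \<in> V2}" for x
      using splitx[of x] P1V1[of x] P2V2[of x] by blast
    then show ?thesis by blast
  qed
  have dimK: "vec.dim V1 + vec.dim V2 = CARD('n)"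
    using vec.dim_sums_Int[OF sV1 sV2] unfolding sumsK V12 by (simp add: vec_dim_card card_cart_basis)
  have n1: "vec.dim V1 \<ge> 1"
  proof -
    have "\<not> V1 \<subseteq> {0}" using V1ne sV1 vec.subspace_0 unfolding V1_def F_def by blast
    then show ?thesis using vec.dim_eq_0 by (metis less_one not_le)
  qed
  have n2: "vec.dim V2 \<ge> 1"
  proof -
    have "\<not> V2 \<subseteq> {0}" using V2ne sV2 vec.subspace_0 unfolding V2_def G_def by blast
    then show ?thesis using vec.dim_eq_0 by (metis less_one not_le)
  qed
  define C1 where "C1 = C \<inter> ext V1"
  define C2 where "C2 = C \<inter> ext V2"
  have sC1: "vec.subspace C1" unfolding C1_def by (intro vec.subspace_inter sC ext_subspace sV1)
  have sC2: "vec.subspace C2" unfolding C2_def by (intro vec.subspace_inter sC ext_subspace sV2)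
  have extP1: "map_matrix emb P1 *v c \<in> ext V1" for c
    unfolding ext_def using P1V1 by (simp add: row_cm_mat)
  have extP2: "map_matrix emb P2 *v c \<in> ext V2" for c
    unfolding ext_def using P2V2 by (simp add: row_cm_mat)
  have sumsL: "{x + y |x y. x \<in> C1 \<and> y \<in> C2} = C"
  proof
    show "{x + y |x y. x \<in> C1 \<and> y \<in> C2} \<subseteq> C"
      unfolding C1_def C2_def using vec.subspace_add[OF sC] by blast
    show "C \<subseteq> {x + y |x y. x \<in> C1 \<and> y \<in> C2}"
    proof
      fix c assume c: "c \<in> C"
      have "c = map_matrix emb P1 *v c + map_matrix emb P2 *v c"
        by (metis hP map_matrix_add map_matrix_mat emb_1 matrix_vector_mult_add_rdistrib matrix_vector_mul_lid)
      moreover have "map_matrix emb P1 *v c \<in> C1"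
        unfolding C1_def P1_def using code_inv[OF Mc c] extP1 P1_def by blast
      moreover have "map_matrix emb P2 *v c \<in> C2"
        unfolding C2_def P2_def using code_inv[OF Mc c] extP2 P2_def by blast
      ultimately show "c \<in> {x + y |x y. x \<in> C1 \<and> y \<in> C2}" by blast
    qed
  qed
  have C12: "C1 \<inter> C2 \<subseteq> {0}"
  proof -
    have "C1 \<inter> C2 \<subseteq> ext (V1 \<inter> V2)" unfolding C1_def C2_def ext_def by auto
    then show ?thesis unfolding V12 ext_zero .
  qed
  have dimL: "vec.dim C1 + vec.dim C2 = vec.dim C"
  proof -
    have "vec.dim (C1 \<inter> C2) = 0" using C12 vec.dim_eq_0 by blast
    then show ?thesis using vec.dim_sums_Int[OF sC1 sC2] unfolding sumsL by linarith
  qed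
  have k1n1: "vec.dim C1 \<le> vec.dim V1"
    using vec.dim_subset[of C1 "ext V1"] dim_ext[OF sV1] unfolding C1_def by auto
  have k2n2: "vec.dim C2 \<le> vec.dim V2"
    using vec.dim_subset[of C2 "ext V2"] dim_ext[OF sV2] unfolding C2_def by auto
  have kn: "vec.dim C \<le> CARD('n)" by (rule dim_subset_UNIV_cart_gen)
  have kne: "vec.dim C \<noteq> CARD('n)"
  proof
    assume "vec.dim C = CARD('n)"
    then have "C = UNIV"
      using vec.subspace_dim_equal[OF sC vec.subspace_UNIV] vec_dim_card by (metis order_refl subset_UNIV)
    then show False using CU by simp
  qed
  have k1: "vec.dim C \<ge> 1"
  proof -
    have "\<not> C \<subseteq> {0}" using C0 sC vec.subspace_0 by blast
    then show ?thesis using vec.dim_eq_0 by (metis less_one not_le)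
  qed
  have L1: "gen_rank_weight emb b 1 C + vec.dim C1 \<le> vec.dim V1 + 1" if "vec.dim C1 \<ge> 1"
    by (rule local_singleton[OF sC sV1 sC1 _ _ that]) (auto simp: C1_def)
  have L2: "gen_rank_weight emb b 1 C + vec.dim C2 \<le> vec.dim V2 + 1" if "vec.dim C2 \<ge> 1"
    by (rule local_singleton[OF sC sV2 sC2 _ _ that]) (auto simp: C2_def)
  show False
  proof (cases "vec.dim C1 \<ge> 1")
    case True
    note a = L1[OF True]
    then have "vec.dim C2 \<ge> 1" using mrd dimK dimL k1n1 k2n2 kn n2 by linarith
    then show False using a L2 mrd dimK dimL k1n1 k2n2 kn kne n1 n2 by linarith
  next
    case False
    then have "vec.dim C2 \<ge> 1" using k1 dimL by linarith
    note a = L2[OF this]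
    then have "vec.dim C1 \<ge> 1" using mrd dimK dimL k1n1 k2n2 kn n1 by linarith
    then show False using False by simp
  qed
qed

end

theorem theorem3:
  fixes emb :: "'K::field \<Rightarrow> 'L::field"
    and b :: "'m::finite \<Rightarrow> 'L"
    and M :: "'K^'n^'n"
    and C :: "('L^'n) set"
  assumes "field_emb emb"
    and "is_K_basis emb b"
    and "CARD('n) \<le> CARD('m)"
    and "is_M_code emb M C"
    and "C \<noteq> {0}" and "C \<noteq> UNIV"
    and "gen_rank_weight emb b 1 C = CARD('n) - vec.dim C + 1"
  shows "\<exists>\<pi> (l::nat). l \<ge> 1 \<and> lead_coeff \<pi> = 1 \<and> irreducible \<pi> \<and> min_poly_mat M = \<pi> ^ l"
proof -
  interpret ext_setup emb b using assms(1,2) by unfold_locales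
  define \<mu> where "\<mu> = min_poly_mat M"
  have mp: "lead_coeff \<mu> = 1" "poly_mat \<mu> M = 0"
    "\<And>q. q \<noteq> 0 \<Longrightarrow> poly_mat q M = 0 \<Longrightarrow> degree \<mu> \<le> degree q"
    using min_poly_props[of M] unfolding \<mu>_def by blast+
  have dm: "degree \<mu> \<ge> 1" unfolding \<mu>_def by (rule min_poly_degree)
  have ker_ne: "{x. poly_mat f M *v x = 0} \<noteq> {0}"
    if fg: "\<mu> = f * g" and df: "degree f \<ge> 1" and dg: "degree g \<ge> 1" for f g
  proof
    assume k0: "{x. poly_mat f M *v x = 0} = {0}"
    have fnz: "f \<noteq> 0" "g \<noteq> 0" using df dg by auto
    have "poly_mat g M *v x = 0" for x
    proof -
      have "poly_mat f M *v (poly_mat g M *v x) = 0"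
        using mp(2) fg by (simp add: matrix_vector_mul_assoc poly_mat_mult)
      then show ?thesis using k0 by blast
    qed
    then have "poly_mat g M = 0" by (simp add: matrix_eq)
    then have "degree \<mu> \<le> degree g" using mp(3) fnz by blast
    moreover have "degree \<mu> = degree f + degree g" using fg fnz degree_mult_eq by blast
    ultimately show False using df by linarith
  qed
  show ?thesis
  proof (cases "\<exists>\<pi> l. l \<ge> 1 \<and> lead_coeff \<pi> = 1 \<and> irreducible \<pi> \<and> \<mu> = \<pi>^l")
    case True
    then show ?thesis unfolding \<mu>_def by blast
  next
    case False
    then obtain f g s t where fg: "\<mu> = f * g" "degree f \<ge> 1" "degree g \<ge> 1" "s * f + t * g = 1"
      using factor_or_split[OF mp(1) dm] by blast
    have "poly_mat (f * g) M = 0" using mp(2) fg(1) by simp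
    moreover have "{x. poly_mat f M *v x = 0} \<noteq> {0}" using ker_ne fg by blast
    moreover have "{x. poly_mat g M *v x = 0} \<noteq> {0}"
      using ker_ne[of g f] fg by (simp add: mult.commute)
    ultimately have False
      using decomp_false[OF assms(4,5,6,7)] fg(4) by blast
    then show ?thesis ..
  qed
qed

end
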